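(* (i) If $(S,* )$ is a free LD-system, there is no binary operation $\circ$ on $S$ such that $(S,*,\circ)$ is an ALD-system. (ii) A free ALD-system does not satisfy the law $x\circ y = (x*y)\circ x$; in particular it is not an LD-monoid.
   Context: An LD-system is a set with a binary operation $*$ satisfying $x*(y*z)=(x*y)*(x*z)$ (LD). An ALD-system is a set with two binary operations $*,\circ$ satisfying (LD), $x*(y*z)=(x\circ y)*z$ (ALD$_1$) and $x*(y\circ z)=(x*y)\circ(x*z)$ (ALD$_2$). An LD-monoid is an ALD-system in which moreover $\circ$ is associative with a unit and $x\circ y=(x*y)\circ x$ holds. Free LD-systems and free ALD-systems are the free algebras (of some rank $n\ge1$) in the varieties defined by these laws. *)

theory Defs
  imports Main
begin

definition closed_op :: "'a set \<Rightarrow> ('a \<Rightarrow> 'a \<Rightarrow> 'a) \<Rightarrow> bool" where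
  "closed_op S f \<longleftrightarrow> (\<forall>x\<in>S. \<forall>y\<in>S. f x y \<in> S)"

definition is_LD_system :: "'a set \<Rightarrow> ('a \<Rightarrow> 'a \<Rightarrow> 'a) \<Rightarrow> bool" where
  "is_LD_system S st \<longleftrightarrow> closed_op S st \<and>
     (\<forall>x\<in>S. \<forall>y\<in>S. \<forall>z\<in>S. st x (st y z) = st (st x y) (st x z))"

definition is_ALD_system :: "'a set \<Rightarrow> ('a \<Rightarrow> 'a \<Rightarrow> 'a) \<Rightarrow> ('a \<Rightarrow> 'a \<Rightarrow> 'a) \<Rightarrow> bool" where
  "is_ALD_system S st ci \<longleftrightarrow> is_LD_system S st \<and> closed_op S ci \<and>
     (\<forall>x\<in>S. \<forall>y\<in>S. \<forall>z\<in>S. st x (st y z) = st (ci x y) z) \<and>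
     (\<forall>x\<in>S. \<forall>y\<in>S. \<forall>z\<in>S. st x (ci y z) = ci (st x y) (st x z))"

definition is_LD_monoid :: "'a set \<Rightarrow> ('a \<Rightarrow> 'a \<Rightarrow> 'a) \<Rightarrow> ('a \<Rightarrow> 'a \<Rightarrow> 'a) \<Rightarrow> bool" where
  "is_LD_monoid S st ci \<longleftrightarrow> is_ALD_system S st ci \<and>
     (\<forall>x\<in>S. \<forall>y\<in>S. \<forall>z\<in>S. ci (ci x y) z = ci x (ci y z)) \<and>
     (\<exists>e\<in>S. \<forall>x\<in>S. ci e x = x \<and> ci x e = x) \<and>
     (\<forall>x\<in>S. \<forall>y\<in>S. ci x y = ci (st x y) x)"

datatype ldterm = LVar nat | LOp ldterm ldterm

fun lvars :: "ldterm \<Rightarrow> nat set" where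
  "lvars (LVar i) = {i}"
| "lvars (LOp a b) = lvars a \<union> lvars b"

fun leval :: "(nat \<Rightarrow> 'a) \<Rightarrow> ('a \<Rightarrow> 'a \<Rightarrow> 'a) \<Rightarrow> ldterm \<Rightarrow> 'a" where
  "leval g st (LVar i) = g i"
| "leval g st (LOp a b) = st (leval g st a) (leval g st b)"

inductive ld_eq :: "ldterm \<Rightarrow> ldterm \<Rightarrow> bool" where
  ld_refl: "ld_eq t t"
| ld_sym: "ld_eq t u \<Longrightarrow> ld_eq u t"
| ld_trans: "ld_eq t u \<Longrightarrow> ld_eq u v \<Longrightarrow> ld_eq t v"
| ld_cong: "ld_eq a a' \<Longrightarrow> ld_eq b b' \<Longrightarrow> ld_eq (LOp a b) (LOp a' b')"
| ld_law: "ld_eq (LOp x (LOp y z)) (LOp (LOp x y) (LOp x z))"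

text \<open>(S,st) is a free LD-system of rank n: there are generators g 0, ..., g (n-1)
  in S such that evaluation induces a bijection from terms in n variables modulo
  LD-equivalence onto S (i.e. (S,st) is isomorphic to the free LD-system on n generators).\<close>
definition free_LD_system :: "nat \<Rightarrow> 'a set \<Rightarrow> ('a \<Rightarrow> 'a \<Rightarrow> 'a) \<Rightarrow> bool" where
  "free_LD_system n S st \<longleftrightarrow> n \<ge> 1 \<and> is_LD_system S st \<and>
     (\<exists>g. (\<forall>i<n. g i \<in> S) \<and>
          S = {leval g st t | t. lvars t \<subseteq> {..<n}} \<and>
          (\<forall>t u. lvars t \<subseteq> {..<n} \<longrightarrow> lvars u \<subseteq> {..<n} \<longrightarrow>
                 (leval g st t = leval g st u \<longleftrightarrow> ld_eq t u)))"

datatype aldterm = AVar nat | AStar aldterm aldterm | ACirc aldterm aldterm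

fun avars :: "aldterm \<Rightarrow> nat set" where
  "avars (AVar i) = {i}"
| "avars (AStar a b) = avars a \<union> avars b"
| "avars (ACirc a b) = avars a \<union> avars b"

fun aeval :: "(nat \<Rightarrow> 'a) \<Rightarrow> ('a \<Rightarrow> 'a \<Rightarrow> 'a) \<Rightarrow> ('a \<Rightarrow> 'a \<Rightarrow> 'a) \<Rightarrow> aldterm \<Rightarrow> 'a" where
  "aeval g st ci (AVar i) = g i"
| "aeval g st ci (AStar a b) = st (aeval g st ci a) (aeval g st ci b)"
| "aeval g st ci (ACirc a b) = ci (aeval g st ci a) (aeval g st ci b)"

inductive ald_eq :: "aldterm \<Rightarrow> aldterm \<Rightarrow> bool" where
  ald_refl: "ald_eq t t"
| ald_sym: "ald_eq t u \<Longrightarrow> ald_eq u t"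
| ald_trans: "ald_eq t u \<Longrightarrow> ald_eq u v \<Longrightarrow> ald_eq t v"
| ald_cong_star: "ald_eq a a' \<Longrightarrow> ald_eq b b' \<Longrightarrow> ald_eq (AStar a b) (AStar a' b')"
| ald_cong_circ: "ald_eq a a' \<Longrightarrow> ald_eq b b' \<Longrightarrow> ald_eq (ACirc a b) (ACirc a' b')"
| ald_LD: "ald_eq (AStar x (AStar y z)) (AStar (AStar x y) (AStar x z))"
| ald_ALD1: "ald_eq (AStar x (AStar y z)) (AStar (ACirc x y) z)"
| ald_ALD2: "ald_eq (AStar x (ACirc y z)) (ACirc (AStar x y) (AStar x z))"

definition free_ALD_system :: "nat \<Rightarrow> 'a set \<Rightarrow> ('a \<Rightarrow> 'a \<Rightarrow> 'a) \<Rightarrow> ('a \<Rightarrow> 'a \<Rightarrow> 'a) \<Rightarrow> bool" where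
  "free_ALD_system n S st ci \<longleftrightarrow> n \<ge> 1 \<and> is_ALD_system S st ci \<and>
     (\<exists>g. (\<forall>i<n. g i \<in> S) \<and>
          S = {aeval g st ci t | t. avars t \<subseteq> {..<n}} \<and>
          (\<forall>t u. avars t \<subseteq> {..<n} \<longrightarrow> avars u \<subseteq> {..<n} \<longrightarrow>
                 (aeval g st ci t = aeval g st ci u \<longleftrightarrow> ald_eq t u)))"

end

theory Submission
  imports Defs
begin

lemma ld_model: "ld_eq t u \<Longrightarrow> leval h (\<lambda>x y. Suc y) t = leval h (\<lambda>x y. Suc y) u"
  by (induction rule: ld_eq.induct) auto

lemma ald_model: "ald_eq t u \<Longrightarrow>
   aeval h (\<lambda>x y. y) (\<lambda>x y. 2*x+y) t = aeval h (\<lambda>x y. y) (\<lambda>x y. (2::int)*x+y) u"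
  by (induction rule: ald_eq.induct) auto

lemma part1:
  assumes "free_LD_system n S st" shows "\<not> (\<exists>ci. is_ALD_system S st ci)"
proof
  assume "\<exists>ci. is_ALD_system S st ci"
  then obtain ci where ci: "is_ALD_system S st ci" by blast
  from assms obtain g where n: "n \<ge> 1" and g: "\<forall>i<n. g i \<in> S"
    and SS: "S = {leval g st t | t. lvars t \<subseteq> {..<n}}"
    and inj: "\<forall>t u. lvars t \<subseteq> {..<n} \<longrightarrow> lvars u \<subseteq> {..<n} \<longrightarrow>
                 (leval g st t = leval g st u \<longleftrightarrow> ld_eq t u)"
    unfolding free_LD_system_def by blast
  have x: "g 0 \<in> S" using g n by auto
  have "ci (g 0) (g 0) \<in> S" using ci x unfolding is_ALD_system_def closed_op_def by blast
  then obtain t where t: "lvars t \<subseteq> {..<n}" "ci (g 0) (g 0) = leval g st t"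
    using SS by blast
  have "st (g 0) (st (g 0) (g 0)) = st (ci (g 0) (g 0)) (g 0)"
    using ci x unfolding is_ALD_system_def by blast
  hence "leval g st (LOp (LVar 0) (LOp (LVar 0) (LVar 0))) = leval g st (LOp t (LVar 0))"
    using t by simp
  hence "ld_eq (LOp (LVar 0) (LOp (LVar 0) (LVar 0))) (LOp t (LVar 0))"
    using inj[rule_format, of "LOp (LVar 0) (LOp (LVar 0) (LVar 0))" "LOp t (LVar 0)"] t n by auto
  from ld_model[OF this, of "\<lambda>_. 0"] show False by simp
qed

lemma part2:
  assumes "free_ALD_system m T st' ci'" shows "\<not> (\<forall>x\<in>T. \<forall>y\<in>T. ci' x y = ci' (st' x y) x)"
proof
  assume law: "\<forall>x\<in>T. \<forall>y\<in>T. ci' x y = ci' (st' x y) x"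
  from assms obtain g where n: "m \<ge> 1" and g: "\<forall>i<m. g i \<in> T"
    and SS: "T = {aeval g st' ci' t | t. avars t \<subseteq> {..<m}}"
    and inj: "\<forall>t u. avars t \<subseteq> {..<m} \<longrightarrow> avars u \<subseteq> {..<m} \<longrightarrow>
                 (aeval g st' ci' t = aeval g st' ci' u \<longleftrightarrow> ald_eq t u)"
    unfolding free_ALD_system_def by blast
  have x: "g 0 \<in> T" using g n by auto
  have y: "ci' (g 0) (g 0) \<in> T" using SS n
    by (auto intro!: exI[of _ "ACirc (AVar 0) (AVar 0)"])
  have "ci' (g 0) (ci' (g 0) (g 0)) = ci' (st' (g 0) (ci' (g 0) (g 0))) (g 0)"
    using law x y by blast
  hence "aeval g st' ci' (ACirc (AVar 0) (ACirc (AVar 0) (AVar 0)))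
       = aeval g st' ci' (ACirc (AStar (AVar 0) (ACirc (AVar 0) (AVar 0))) (AVar 0))"
    by simp
  hence "ald_eq (ACirc (AVar 0) (ACirc (AVar 0) (AVar 0)))
           (ACirc (AStar (AVar 0) (ACirc (AVar 0) (AVar 0))) (AVar 0))"
    using inj[rule_format, of "ACirc (AVar 0) (ACirc (AVar 0) (AVar 0))"
      "ACirc (AStar (AVar 0) (ACirc (AVar 0) (AVar 0))) (AVar 0)"] n by auto
  from ald_model[OF this, of "\<lambda>_. 1"] show False by simp
qed

theorem proposition1p5:
  fixes n m :: nat
    and S :: "'a set" and st :: "'a \<Rightarrow> 'a \<Rightarrow> 'a"
    and T :: "'b set" and st' :: "'b \<Rightarrow> 'b \<Rightarrow> 'b" and ci' :: "'b \<Rightarrow> 'b \<Rightarrow> 'b"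
  shows "(free_LD_system n S st \<longrightarrow> \<not> (\<exists>ci. is_ALD_system S st ci))
       \<and> (free_ALD_system m T st' ci' \<longrightarrow>
            \<not> (\<forall>x\<in>T. \<forall>y\<in>T. ci' x y = ci' (st' x y) x) \<and> \<not> is_LD_monoid T st' ci')"
  using part1 part2 unfolding is_LD_monoid_def by blast

end
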